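(* For $\gamma>0$ let $\Theta^*$ be a random variable on $\mathbb S^1=\mathbb R/2\pi\mathbb Z$ with density $u^*$, where $u^*(\theta)=\frac1Z\Big(\frac{(e^{-2\pi\alpha}-1)e^{\alpha(\theta+2\sin\theta)}}{\int_0^{2\pi}e^{-\alpha(r+2\sin r)}dr}\int_0^\theta e^{-\alpha(r+2\sin r)}dr+e^{\alpha(\theta+2\sin\theta)}\Big)$, $\alpha=2/\gamma$, $Z$ a normalizer. Then for any constants $c>0$ and $\epsilon>0$ there exists $\gamma_0>0$ such that $\mathbb P[|\Theta^*-2\pi/3|>c]<\epsilon$ for all $0<\gamma<\gamma_0$ (distance measured on the circle).
   Context: $u^*$ is the invariant density of $d\theta=I_2(1+2\cos\theta)dt+\sqrt{\gamma I_2}dB_t$ on the circle (for any fixed $I_2>0$). *)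

theory Defs
  imports "HOL-Analysis.Analysis"
begin

definition alpha :: "real \<Rightarrow> real" where
  "alpha \<gamma> = 2 / \<gamma>"

definition negexp :: "real \<Rightarrow> real \<Rightarrow> real" where
  "negexp a r = exp (- a * (r + 2 * sin r))"

definition u_unnorm :: "real \<Rightarrow> real \<Rightarrow> real" where
  "u_unnorm \<gamma> \<theta> =
     (let a = alpha \<gamma> in
        (exp (-2 * pi * a) - 1) * exp (a * (\<theta> + 2 * sin \<theta>))
          / integral {0..2*pi} (negexp a) * integral {0..\<theta>} (negexp a)
        + exp (a * (\<theta> + 2 * sin \<theta>)))"

definition Zn :: "real \<Rightarrow> real" where
  "Zn \<gamma> = integral {0..2*pi} (u_unnorm \<gamma>)"

text \<open>The invariant density u* on [0, 2 pi] (representing the circle R / 2 pi Z).\<close>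
definition u_star :: "real \<Rightarrow> real \<Rightarrow> real" where
  "u_star \<gamma> \<theta> = u_unnorm \<gamma> \<theta> / Zn \<gamma>"

definition circ_dist :: "real \<Rightarrow> real \<Rightarrow> real" where
  "circ_dist x y = (INF k::int. \<bar>x - y - 2 * pi * of_int k\<bar>)"

end

theory Submission imports Defs begin

definition ff :: "real \<Rightarrow> real" where "ff x = x + 2 * sin x"

lemma ff_deriv: "DERIV ff x :> 1 + 2 * cos x"
  unfolding ff_def by (auto intro!: derivative_eq_intros)

lemma ff_cont: "continuous_on S ff"
  unfolding ff_def by (intro continuous_intros)

lemma cos_gt1: "0 < t \<Longrightarrow> t < 2*pi/3 \<Longrightarrow> cos t > -1/2"
  using cos_monotone_0_pi[of t "2*pi/3"] cos_120 by auto

lemma cos_lt: "2*pi/3 < t \<Longrightarrow> t < 4*pi/3 \<Longrightarrow> cos t < -1/2"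
proof (cases "t \<le> pi")
  case True
  assume "2*pi/3 < t" then show ?thesis using cos_monotone_0_pi[of "2*pi/3" t] cos_120 True by auto
next
  case False
  assume "t < 4*pi/3"
  then have "cos (2*pi - t) < cos (2*pi/3)"
    using False by (intro cos_monotone_0_pi) auto
  then show ?thesis using cos_120 by simp
qed

lemma cos_gt2: "4*pi/3 < t \<Longrightarrow> t < 2*pi \<Longrightarrow> cos t > -1/2"
proof -
  assume "4*pi/3 < t" "t < 2*pi"
  then have "cos (2*pi - t) > -1/2" by (intro cos_gt1) auto
  then show ?thesis by simp
qed

lemma ff_inc1: assumes "0 \<le> x" "x < y" "y \<le> 2*pi/3" shows "ff x < ff y"
proof (rule DERIV_pos_imp_increasing_open[of x y ff])
  fix t assume t: "x < t" "t < y"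
  show "\<exists>z. DERIV ff t :> z \<and> z > 0"
  proof -
    have "0 < t" "t < 2*pi/3" using t assms by linarith+
    then have c: "cos t > -1/2" by (rule cos_gt1)
    have "0 < 1 + 2 * cos t" using c by linarith
    then show ?thesis using ff_deriv[of t] by blast
  qed
next
  show "x < y" using assms by simp
next
  show "continuous_on {x..y} ff" by (rule ff_cont)
qed

lemma ff_dec: assumes "2*pi/3 \<le> x" "x < y" "y \<le> 4*pi/3" shows "ff y < ff x"
proof (rule DERIV_neg_imp_decreasing_open[of x y ff])
  fix t assume t: "x < t" "t < y"
  show "\<exists>z. DERIV ff t :> z \<and> z < 0"
  proof -
    have "2*pi/3 < t" "t < 4*pi/3" using t assms by linarith+
    then have c: "cos t < -1/2" by (rule cos_lt)
    have "1 + 2 * cos t < 0" using c by linarith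
    then show ?thesis using ff_deriv[of t] by blast
  qed
next
  show "x < y" using assms by simp
next
  show "continuous_on {x..y} ff" by (rule ff_cont)
qed

lemma ff_inc2: assumes "4*pi/3 \<le> x" "x < y" "y \<le> 2*pi" shows "ff x < ff y"
proof (rule DERIV_pos_imp_increasing_open[of x y ff])
  fix t assume t: "x < t" "t < y"
  show "\<exists>z. DERIV ff t :> z \<and> z > 0"
  proof -
    have "4*pi/3 < t" "t < 2*pi" using t assms by linarith+
    then have c: "cos t > -1/2" by (rule cos_gt2)
    have "0 < 1 + 2 * cos t" using c by linarith
    then show ?thesis using ff_deriv[of t] by blast
  qed
next
  show "x < y" using assms by simp
next
  show "continuous_on {x..y} ff" by (rule ff_cont)
qed

lemma ff_lt_F: "0 \<le> x \<Longrightarrow> x \<le> 4*pi/3 \<Longrightarrow> x \<noteq> 2*pi/3 \<Longrightarrow> ff x < ff (2*pi/3)"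
  using ff_inc1[of x "2*pi/3"] ff_dec[of "2*pi/3" x] by (cases "x < 2*pi/3") auto

lemma m_lt_F: "ff (4*pi/3) < ff (2*pi/3)"
  using ff_dec[of "2*pi/3" "4*pi/3"] by auto

lemma ff_nonneg: "0 \<le> x \<Longrightarrow> x \<le> 2*pi \<Longrightarrow> 0 \<le> ff x"
proof (cases "x \<le> pi")
  case True
  assume "0 \<le> x" then show ?thesis using sin_ge_zero[of x] True unfolding ff_def by auto
next
  case False
  have "-1 \<le> sin x" by simp
  then show ?thesis using pi_gt3 False unfolding ff_def by linarith
qed

lemma ff_le: "0 \<le> x \<Longrightarrow> x \<le> 2*pi \<Longrightarrow> ff x \<le> 2*pi"
proof (cases "x \<le> pi")
  case True
  have "sin x \<le> 1" by simp
  then show ?thesis using pi_gt3 True unfolding ff_def by linarith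
next
  case False
  assume "x \<le> 2*pi"
  have "sin x \<le> 0"
  proof (cases "x = 2*pi")
    case True then show ?thesis by simp
  next
    case F2: False then show ?thesis using False \<open>x \<le> 2*pi\<close> by (intro sin_le_zero) auto
  qed
  then show ?thesis using \<open>x \<le> 2*pi\<close> unfolding ff_def by auto
qed

lemma key_pt:
  assumes "\<And>x. 0 \<le> x \<Longrightarrow> x \<le> 4*pi/3 \<Longrightarrow> \<bar>x - 2*pi/3\<bar> > c \<Longrightarrow> ff x \<le> ff (2*pi/3) - d"
    and "d \<le> ff (2*pi/3) - ff (4*pi/3)"
    and "0 \<le> t" "t \<le> r" "r \<le> 2*pi" "\<bar>t - 2*pi/3\<bar> > c"
  shows "ff t - ff r \<le> ff (2*pi/3) - d - ff (4*pi/3)"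
proof (cases "t > 4*pi/3")
  case True
  then have "ff t \<le> ff r" using ff_inc2[of t r] assms by (cases "t = r") auto
  then show ?thesis using assms by auto
next
  case False
  then have ft: "ff t \<le> ff (2*pi/3) - d" using assms by auto
  show ?thesis
  proof (cases "r < 2*pi/3")
    case True
    then have "ff t \<le> ff r" using ff_inc1[of t r] assms by (cases "t = r") auto
    then show ?thesis using assms by auto
  next
    case False
    have "ff (4*pi/3) \<le> ff r"
    proof (cases "r \<le> 4*pi/3")
      case True
      show ?thesis
      proof (cases "r = 4*pi/3")
        case True then have "ff r = ff (4*pi/3)" by (rule arg_cong)
        then show ?thesis by linarith
      next
        case F2: False
        then show ?thesis using ff_dec[of r "4*pi/3"] False True by auto
      qed
    next
      case False
      then show ?thesis using ff_inc2[of "4*pi/3" r] assms by auto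
    qed
    then show ?thesis using ft by auto
  qed
qed


lemma delta_ex:
  assumes "c > 0"
  shows "\<exists>d>0. d \<le> ff (2*pi/3) - ff (4*pi/3) \<and>
    (\<forall>x. 0 \<le> x \<longrightarrow> x \<le> 4*pi/3 \<longrightarrow> \<bar>x - 2*pi/3\<bar> > c \<longrightarrow> ff x \<le> ff (2*pi/3) - d)"
proof -
  define S where "S = {0..4*pi/3} \<inter> {x. c \<le> \<bar>x - 2*pi/3\<bar>}"
  have cS: "compact S" unfolding S_def
    by (intro compact_Int_closed compact_Icc closed_Collect_le continuous_intros)
  show ?thesis
  proof (cases "S = {}")
    case True
    then show ?thesis using m_lt_F unfolding S_def
      by (intro exI[of _ "ff (2*pi/3) - ff (4*pi/3)"]) force
  next
    case False
    then obtain x where x: "x \<in> S" "\<forall>y\<in>S. ff y \<le> ff x"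
      using continuous_attains_sup[OF cS False ff_cont] by blast
    have "ff x < ff (2*pi/3)" using x(1) assms unfolding S_def by (intro ff_lt_F) auto
    then show ?thesis using m_lt_F x unfolding S_def
      by (intro exI[of _ "min (ff (2*pi/3) - ff (4*pi/3)) (ff (2*pi/3) - ff x)"]) force
  qed
qed

lemma negexp_ff: "negexp a r = exp (- a * ff r)"
  unfolding negexp_def ff_def by simp

lemma negexp_cont: "continuous_on S (negexp a)"
  unfolding negexp_def by (intro continuous_intros)

lemma I2_pos:
  assumes "a > 0"
  shows "integral {0..2*pi} (negexp a) \<ge> 2*pi*exp(-2*pi*a)"
proof -
  have "integral {0..2*pi} (\<lambda>x. exp(-2*pi*a)) \<le> integral {0..2*pi} (negexp a)"
  proof (rule integral_le)
    show "negexp a integrable_on {0..2*pi}" by (intro integrable_continuous_interval negexp_cont)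
    fix x assume "x \<in> {0..2*pi}"
    then have "ff x \<le> 2*pi" by (intro ff_le) auto
    then show "exp(-2*pi*a) \<le> negexp a x" unfolding negexp_ff using assms
      by (simp add: mult_left_mono)
  qed auto
  then show ?thesis by simp
qed

lemma decomp:
  assumes "alpha \<gamma> > 0" "0 \<le> t" "t \<le> 2*pi"
  shows "u_unnorm \<gamma> t = (integral {t..2*pi} (\<lambda>r. exp (alpha \<gamma> * (ff t - ff r)))
          + integral {0..t} (\<lambda>r. exp (alpha \<gamma> * (ff t - ff r - 2*pi))))
          / integral {0..2*pi} (negexp (alpha \<gamma>))"
proof -
  define a where "a = alpha \<gamma>"
  define I2 where "I2 = integral {0..2*pi} (negexp a)"
  define It where "It = integral {0..t} (negexp a)"
  define Jt where "Jt = integral {t..2*pi} (negexp a)"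
  define E where "E = exp (a * ff t)"
  have a: "a > 0" using assms a_def by auto
  have I2p: "I2 > 0" using I2_pos[OF a] unfolding I2_def
    by (smt (verit) exp_gt_zero mult_pos_pos pi_gt_zero)
  have comb: "It + Jt = I2" unfolding It_def Jt_def I2_def using assms
    by (intro Henstock_Kurzweil_Integration.integral_combine integrable_continuous_interval negexp_cont) auto
  have P: "integral {t..2*pi} (\<lambda>r. exp (a * (ff t - ff r))) = E * Jt"
  proof -
    have "integral {t..2*pi} (\<lambda>r. exp (a * (ff t - ff r))) = integral {t..2*pi} (\<lambda>r. E * negexp a r)"
      unfolding E_def negexp_ff by (simp add: algebra_simps flip: exp_add)
    then show ?thesis unfolding Jt_def by simp
  qed
  have Q: "integral {0..t} (\<lambda>r. exp (a * (ff t - ff r - 2*pi))) = (exp (-2*pi*a) * E) * It"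
  proof -
    have "integral {0..t} (\<lambda>r. exp (a * (ff t - ff r - 2*pi))) = integral {0..t} (\<lambda>r. (exp (-2*pi*a) * E) * negexp a r)"
      unfolding E_def negexp_ff by (simp add: algebra_simps flip: exp_add)
    then show ?thesis unfolding It_def by simp
  qed
  have "u_unnorm \<gamma> t = (exp (-2*pi*a) - 1) * E / I2 * It + E"
    unfolding u_unnorm_def Let_def a_def[symmetric] E_def ff_def I2_def It_def by simp
  also have "\<dots> = (E * Jt + (exp (-2*pi*a) * E) * It) / I2"
    using I2p comb[symmetric] by (simp add: field_simps)
  finally show ?thesis using P Q unfolding a_def I2_def by simp
qed


lemma upper:
  assumes a: "alpha \<gamma> > 0"
    and dprop: "\<And>x. 0 \<le> x \<Longrightarrow> x \<le> 4*pi/3 \<Longrightarrow> \<bar>x - 2*pi/3\<bar> > c \<Longrightarrow> ff x \<le> ff (2*pi/3) - d"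
    and dle: "d \<le> ff (2*pi/3) - ff (4*pi/3)"
    and t: "0 \<le> t" "t \<le> 2*pi" "\<bar>t - 2*pi/3\<bar> > c"
  shows "u_unnorm \<gamma> t \<le> 2*pi*exp (alpha \<gamma> * (ff (2*pi/3) - d - ff (4*pi/3))) / integral {0..2*pi} (negexp (alpha \<gamma>))"
proof -
  define a where "a = alpha \<gamma>"
  define C where "C = exp (a * (ff (2*pi/3) - d - ff (4*pi/3)))"
  have ap: "a > 0" using a a_def by auto
  have I2p: "integral {0..2*pi} (negexp a) > 0" using I2_pos[OF ap]
    by (smt (verit) exp_gt_zero mult_pos_pos pi_gt_zero)
  have C1: "1 \<le> C" unfolding C_def using ap dle by simp
  have P: "integral {t..2*pi} (\<lambda>r. exp (a * (ff t - ff r))) \<le> integral {t..2*pi} (\<lambda>r. C)"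
  proof (rule integral_le)
    show "(\<lambda>r. exp (a * (ff t - ff r))) integrable_on {t..2*pi}"
      by (intro integrable_continuous_interval continuous_intros ff_cont)
    fix r assume "r \<in> {t..2*pi}"
    then have "ff t - ff r \<le> ff (2*pi/3) - d - ff (4*pi/3)"
      using key_pt[OF dprop dle, where t=t and r=r] t by auto
    then show "exp (a * (ff t - ff r)) \<le> C" unfolding C_def using ap
      by (simp add: mult_left_mono)
  qed auto
  have Q: "integral {0..t} (\<lambda>r. exp (a * (ff t - ff r - 2*pi))) \<le> integral {0..t} (\<lambda>r. C)"
  proof (rule integral_le)
    show "(\<lambda>r. exp (a * (ff t - ff r - 2*pi))) integrable_on {0..t}"
      by (intro integrable_continuous_interval continuous_intros ff_cont)
    fix r assume "r \<in> {0..t}"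
    then have "ff t - ff r - 2*pi \<le> 0"
      using ff_le[of t] ff_nonneg[of r] t by auto
    then have "exp (a * (ff t - ff r - 2*pi)) \<le> 1" using ap
      by (simp add: mult_nonneg_nonpos)
    then show "exp (a * (ff t - ff r - 2*pi)) \<le> C" using C1 by linarith
  qed auto
  have "u_unnorm \<gamma> t \<le> ((2*pi - t) * C + t * C) / integral {0..2*pi} (negexp a)"
    unfolding decomp[OF a t(1,2)] a_def[symmetric]
    using P Q t I2p by (intro divide_right_mono) auto
  also have "\<dots> = 2*pi*C / integral {0..2*pi} (negexp a)" by (simp add: algebra_simps)
  finally show ?thesis unfolding C_def a_def .
qed

lemma nonneg:
  assumes a: "alpha \<gamma> > 0" and t: "0 \<le> t" "t \<le> 2*pi"
  shows "integral {t..2*pi} (\<lambda>r. exp (alpha \<gamma> * (ff t - ff r))) / integral {0..2*pi} (negexp (alpha \<gamma>)) \<le> u_unnorm \<gamma> t"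
proof -
  have I2p: "integral {0..2*pi} (negexp (alpha \<gamma>)) > 0" using I2_pos[OF a]
    by (smt (verit) exp_gt_zero mult_pos_pos pi_gt_zero)
  have "0 \<le> integral {0..t} (\<lambda>r. exp (alpha \<gamma> * (ff t - ff r - 2*pi)))"
    by (intro integral_nonneg integrable_continuous_interval continuous_intros ff_cont) auto
  then show ?thesis unfolding decomp[OF a t] using I2p by (intro divide_right_mono) auto
qed

lemma lower:
  assumes a: "alpha \<gamma> > 0" and eta: "0 < \<eta>" "\<eta> \<le> pi/3"
    and n1: "\<And>x. \<bar>x - 2*pi/3\<bar> \<le> \<eta> \<Longrightarrow> ff x \<ge> ff (2*pi/3) - d/4"
    and n2: "\<And>x. \<bar>x - 4*pi/3\<bar> \<le> \<eta> \<Longrightarrow> ff x \<le> ff (4*pi/3) + d/4"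
    and t: "2*pi/3 - \<eta> \<le> t" "t \<le> 2*pi/3"
  shows "\<eta> * exp (alpha \<gamma> * (ff (2*pi/3) - d/2 - ff (4*pi/3))) / integral {0..2*pi} (negexp (alpha \<gamma>)) \<le> u_unnorm \<gamma> t"
proof -
  define a where "a = alpha \<gamma>"
  have ap: "a > 0" using a a_def by auto
  have I2p: "integral {0..2*pi} (negexp a) > 0" using I2_pos[OF ap]
    by (smt (verit) exp_gt_zero mult_pos_pos pi_gt_zero)
  have t0: "0 \<le> t" "t \<le> 2*pi" using t eta pi_gt_zero by auto
  have cont: "continuous_on X (\<lambda>r. exp (a * (ff t - ff r)))" for X
    by (intro continuous_intros ff_cont)
  have "integral {4*pi/3-\<eta>..4*pi/3} (\<lambda>r. exp (a * (ff (2*pi/3) - d/2 - ff (4*pi/3))))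
        \<le> integral {4*pi/3-\<eta>..4*pi/3} (\<lambda>r. exp (a * (ff t - ff r)))"
  proof (rule integral_le)
    show "(\<lambda>r. exp (a * (ff t - ff r))) integrable_on {4*pi/3-\<eta>..4*pi/3}"
      by (intro integrable_continuous_interval cont)
    fix r assume "r \<in> {4*pi/3-\<eta>..4*pi/3}"
    then have "ff r \<le> ff (4*pi/3) + d/4" using n2 eta by auto
    moreover have "ff t \<ge> ff (2*pi/3) - d/4" using n1 t by auto
    ultimately show "exp (a * (ff (2*pi/3) - d/2 - ff (4*pi/3))) \<le> exp (a * (ff t - ff r))"
      using ap by (simp add: mult_left_mono)
  qed auto
  also have "\<dots> \<le> integral {t..2*pi} (\<lambda>r. exp (a * (ff t - ff r)))"
    using t eta pi_gt_zero
    by (intro integral_subset_le integrable_continuous_interval cont) auto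
  finally have "\<eta> * exp (a * (ff (2*pi/3) - d/2 - ff (4*pi/3))) \<le> integral {t..2*pi} (\<lambda>r. exp (a * (ff t - ff r)))"
    using eta by simp
  then have "\<eta> * exp (a * (ff (2*pi/3) - d/2 - ff (4*pi/3))) / integral {0..2*pi} (negexp a)
       \<le> integral {t..2*pi} (\<lambda>r. exp (a * (ff t - ff r))) / integral {0..2*pi} (negexp a)"
    using I2p by (intro divide_right_mono) auto
  also have "\<dots> \<le> u_unnorm \<gamma> t" using nonneg[OF a t0] unfolding a_def .
  finally show ?thesis unfolding a_def .
qed

lemma u_cont: assumes a: "alpha \<gamma> > 0" shows "continuous_on {0..2*pi} (u_unnorm \<gamma>)"
proof -
  have I2p: "integral {0..2*pi} (negexp (alpha \<gamma>)) > 0" using I2_pos[OF a]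
    by (smt (verit) exp_gt_zero mult_pos_pos pi_gt_zero)
  have "continuous_on {0..2*pi} (\<lambda>x. integral {0..x} (negexp (alpha \<gamma>)))"
    by (intro indefinite_integral_continuous_1 integrable_continuous_interval negexp_cont)
  then show ?thesis unfolding u_unnorm_def Let_def
    using I2p by (intro continuous_intros) auto
qed

lemma u_nonneg:
  assumes a: "alpha \<gamma> > 0" and t: "0 \<le> t" "t \<le> 2*pi"
  shows "0 \<le> u_unnorm \<gamma> t"
proof -
  have I2p: "integral {0..2*pi} (negexp (alpha \<gamma>)) > 0" using I2_pos[OF a]
    by (smt (verit) exp_gt_zero mult_pos_pos pi_gt_zero)
  have "0 \<le> integral {t..2*pi} (\<lambda>r. exp (alpha \<gamma> * (ff t - ff r)))"
    by (intro integral_nonneg integrable_continuous_interval continuous_intros ff_cont) auto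
  then show ?thesis using nonneg[OF a t] I2p by (smt (verit) divide_nonneg_pos)
qed

lemma near:
  assumes "e > 0"
  shows "\<exists>s>0. \<forall>x. \<bar>x - x0\<bar> \<le> s \<longrightarrow> \<bar>ff x - ff x0\<bar> \<le> e"
proof -
  have "isCont ff x0" using ff_deriv by (rule DERIV_isCont)
  then have "ff \<midarrow>x0\<rightarrow> ff x0" by (simp add: isCont_def)
  then obtain s where s: "s > 0" "\<And>x. x \<noteq> x0 \<Longrightarrow> norm (x - x0) < s \<Longrightarrow> norm (ff x - ff x0) < e"
    using assms unfolding LIM_eq by blast
  show ?thesis
  proof (intro exI[of _ "s/2"] conjI allI impI)
    fix x assume "\<bar>x - x0\<bar> \<le> s/2"
    then show "\<bar>ff x - ff x0\<bar> \<le> e" using s assms by (cases "x = x0") force+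
  qed (use s in auto)
qed

lemma circ_le: "circ_dist x y \<le> \<bar>x - y\<bar>"
proof -
  have "circ_dist x y \<le> \<bar>x - y - 2 * pi * of_int (0::int)\<bar>"
    unfolding circ_dist_def by (rule cINF_lower) (auto intro: bdd_belowI[of _ 0])
  then show ?thesis by simp
qed


theorem lemma4p5:
  fixes c \<epsilon> :: real
  assumes "c > 0" and "\<epsilon> > 0"
  shows "\<exists>\<gamma>0>0. \<forall>\<gamma>. 0 < \<gamma> \<and> \<gamma> < \<gamma>0 \<longrightarrow>
           integral {\<theta> \<in> {0..2*pi}. circ_dist \<theta> (2*pi/3) > c} (u_star \<gamma>) < \<epsilon>"
proof -
  define F where "F = ff (2*pi/3)"
  define m where "m = ff (4*pi/3)"
  obtain d where d: "d > 0" "d \<le> F - m"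
    "\<And>x. 0 \<le> x \<Longrightarrow> x \<le> 4*pi/3 \<Longrightarrow> \<bar>x - 2*pi/3\<bar> > c \<Longrightarrow> ff x \<le> F - d"
    using delta_ex[OF assms(1)] unfolding F_def m_def by blast
  obtain s1 where s1: "s1 > 0" "\<And>x. \<bar>x - 2*pi/3\<bar> \<le> s1 \<Longrightarrow> \<bar>ff x - F\<bar> \<le> d/4"
    using near[of "d/4" "2*pi/3"] d(1) unfolding F_def by auto
  obtain s2 where s2: "s2 > 0" "\<And>x. \<bar>x - 4*pi/3\<bar> \<le> s2 \<Longrightarrow> \<bar>ff x - m\<bar> \<le> d/4"
    using near[of "d/4" "4*pi/3"] d(1) unfolding m_def by auto
  define \<eta> where "\<eta> = min (pi/3) (min s1 s2)"
  have eta: "\<eta> > 0" "\<eta> \<le> pi/3" using s1 s2 pi_gt_zero unfolding \<eta>_def by auto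
  have e12: "\<eta> \<le> s1" "\<eta> \<le> s2" unfolding \<eta>_def by auto
  have n1: "ff x \<ge> ff (2*pi/3) - d/4" if "\<bar>x - 2*pi/3\<bar> \<le> \<eta>" for x
  proof -
    have "\<bar>ff x - F\<bar> \<le> d/4" using s1(2)[OF order_trans[OF that e12(1)]] .
    then show ?thesis unfolding F_def abs_le_iff by linarith
  qed
  have n2: "ff x \<le> ff (4*pi/3) + d/4" if "\<bar>x - 4*pi/3\<bar> \<le> \<eta>" for x
  proof -
    have "\<bar>ff x - m\<bar> \<le> d/4" using s2(2)[OF order_trans[OF that e12(2)]] .
    then show ?thesis unfolding m_def abs_le_iff by linarith
  qed
  define \<gamma>0 where "\<gamma>0 = d * \<epsilon> * \<eta>^2 / (4*pi^2)"
  have g0: "\<gamma>0 > 0" unfolding \<gamma>0_def using d eta assms by auto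
  show ?thesis
  proof (intro exI[of _ \<gamma>0] conjI allI impI g0)
    fix \<gamma> :: real assume g: "0 < \<gamma> \<and> \<gamma> < \<gamma>0"
    define a where "a = alpha \<gamma>"
    have a: "alpha \<gamma> > 0" using g unfolding alpha_def by auto
    define I2 where "I2 = integral {0..2*pi} (negexp a)"
    have I2p: "I2 > 0" using I2_pos a unfolding I2_def a_def
      by (smt (verit) exp_gt_zero mult_pos_pos pi_gt_zero)
    define C where "C = exp (a * (F - d - m))"
    define C' where "C' = exp (a * (F - d/2 - m))"
    define U where "U = 2*pi*C / I2"
    define Lz where "Lz = \<eta> * (\<eta> * C' / I2)"
    have Lzp: "Lz > 0" unfolding Lz_def C'_def using eta I2p by auto
    have Up: "U \<ge> 0" unfolding U_def C_def using I2p by auto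
    have ucont: "continuous_on {0..2*pi} (u_unnorm \<gamma>)" by (rule u_cont[OF a])
    have sub: "{2*pi/3-\<eta>..2*pi/3} \<subseteq> {0..2*pi}" using eta pi_gt_zero by auto
    have "integral {2*pi/3-\<eta>..2*pi/3} (\<lambda>x. \<eta> * C' / I2) \<le> integral {2*pi/3-\<eta>..2*pi/3} (u_unnorm \<gamma>)"
    proof (rule integral_le)
      show "u_unnorm \<gamma> integrable_on {2*pi/3-\<eta>..2*pi/3}"
        using ucont sub by (intro integrable_continuous_interval) (rule continuous_on_subset)
      fix x assume "x \<in> {2*pi/3-\<eta>..2*pi/3}"
      then show "\<eta> * C' / I2 \<le> u_unnorm \<gamma> x"
        using lower[OF a eta n1 n2] unfolding C'_def I2_def a_def F_def m_def by auto
    qed auto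
    also have "\<dots> \<le> integral {0..2*pi} (u_unnorm \<gamma>)"
      using sub u_nonneg[OF a] ucont
      by (intro integral_subset_le integrable_continuous_interval)
         (auto intro: continuous_on_subset)
    finally have Zn: "Lz \<le> Zn \<gamma>" unfolding Zn_def Lz_def using eta by simp
    define M where "M = U / Lz"
    have Mb: "u_star \<gamma> x \<le> M" if x: "x \<in> {0..2*pi}" "c < \<bar>x - 2*pi/3\<bar>" for x
    proof -
      have "u_unnorm \<gamma> x \<le> U"
        using upper[OF a d(3)[unfolded F_def] d(2)[unfolded F_def m_def], where t=x] x
        unfolding U_def C_def a_def I2_def F_def m_def by auto
      moreover have "0 \<le> u_unnorm \<gamma> x" using u_nonneg[OF a] x by auto
      ultimately show ?thesis unfolding u_star_def M_def
        using Lzp Zn by (intro frac_le) auto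
    qed
    have M0: "M \<ge> 0" unfolding M_def using Up Lzp by auto
    have CC: "C = C' * exp (- (d/\<gamma>))"
      unfolding C_def C'_def a_def alpha_def using g
      by (simp add: field_simps flip: exp_add)
    have M_eq: "M = 2*pi*exp (- (d/\<gamma>)) / \<eta>^2"
      unfolding M_def U_def Lz_def CC using I2p eta by (simp add: field_simps power2_eq_square C'_def)
    have "d/\<gamma> < exp (d/\<gamma>)" by (rule exp_gt_self)
    then have ex: "exp (- (d/\<gamma>)) < \<gamma>/d" using d g
      by (simp add: exp_minus field_simps)
    have "2*pi*M = 4*pi^2 * exp (- (d/\<gamma>)) / \<eta>^2" unfolding M_eq by (simp add: power2_eq_square)
    also have "\<dots> < 4*pi^2 * (\<gamma>/d) / \<eta>^2" using ex eta
      by (intro divide_strict_right_mono mult_strict_left_mono) auto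
    also have "\<dots> < 4*pi^2 * (\<gamma>0/d) / \<eta>^2" using g d eta
      by (intro divide_strict_right_mono mult_strict_left_mono) auto
    also have "\<dots> = \<epsilon>" unfolding \<gamma>0_def using d eta by (simp add: field_simps)
    finally have Mlt: "2*pi*M < \<epsilon>" .
    define B where "B = {\<theta> \<in> {0..2*pi}. circ_dist \<theta> (2*pi/3) > c}"
    define gg where "gg = (\<lambda>x. if x \<in> B then u_star \<gamma> x else 0)"
    have eqB: "integral B (u_star \<gamma>) = integral {0..2*pi} gg"
      unfolding gg_def integral_restrict_Int by (rule arg_cong[where f="\<lambda>S. integral S _"]) (auto simp: B_def)
    show "integral {\<theta> \<in> {0..2*pi}. circ_dist \<theta> (2*pi/3) > c} (u_star \<gamma>) < \<epsilon>"
    proof (cases "gg integrable_on {0..2*pi}")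
      case True
      have "integral {0..2*pi} gg \<le> integral {0..2*pi} (\<lambda>x. M)"
      proof (rule integral_le[OF True])
        fix x assume x: "x \<in> {0..2*pi}"
        show "gg x \<le> M"
        proof (cases "x \<in> B")
          case True
          then have "c < \<bar>x - 2*pi/3\<bar>" using circ_le[of x "2*pi/3"] unfolding B_def by auto
          then show ?thesis using Mb x True unfolding gg_def by auto
        qed (use M0 gg_def in auto)
      qed auto
      also have "\<dots> = 2*pi*M" by simp
      finally show ?thesis using eqB Mlt unfolding B_def by simp
    next
      case False
      then have "integral {0..2*pi} gg = 0" by (rule not_integrable_integral)
      then show ?thesis using eqB assms(2) unfolding B_def by simp
    qed
  qed
qed

end
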